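(* Let $\mathbb{K}$ be a field of characteristic zero and $m$ a positive integer. Let $V_m$ be the set of all rational functions of the form $\sum_{i=1}^I a_i/b_i^m$ (with $I\ge 0$), where $a_i,b_i\in\mathbb{K}(x,y)[z]$, $\deg_z(a_i)<\deg_z(b_i)$, and the $b_i$ are distinct irreducible polynomials in $\mathbb{K}(x,y)[z]$. Let $f\in V_m$ and $P=\sum_{i,j,k}p_{i,j,k}S_x^iS_y^jS_z^k$ with $p_{i,j,k}\in\mathbb{K}(x,y)$. Then $P(f)\in V_m$.
   Context: The action of $P$ on a rational function $f\in\mathbb{K}(x,y,z)$ is $P(f)=\sum_{i,j,k}p_{i,j,k}\,f(x+i,y+j,z+k)$. *)

theory Defs
  imports "HOL-Computational_Algebra.Polynomial" "HOL-Computational_Algebra.Fraction_Field"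
    "HOL-Computational_Algebra.Factorial_Ring"
begin

text \<open>Model: K[x][y] = 'k poly poly (outer variable y, inner variable x);
  K(x,y) = ('k poly poly) fract;  K(x,y)[z] = K(x,y) poly;
  K(x,y,z) = (K(x,y)[z]) fract, the fraction field of K(x,y)[z].\<close>

type_synonym 'k rat2 = "'k poly poly fract"
type_synonym 'k rat3 = "'k rat2 poly fract"

definition fract_lift :: "('a::idom \<Rightarrow> 'a) \<Rightarrow> 'a fract \<Rightarrow> 'a fract" where
  "fract_lift h f = (SOME g. \<exists>a b. b \<noteq> 0 \<and> f = Fract a b \<and> g = Fract (h a) (h b))"

definition shx_pp :: "'k::field poly poly \<Rightarrow> 'k poly poly" where
  "shx_pp q = map_poly (\<lambda>c. pcompose c [:1, 1:]) q"
definition shy_pp :: "'k::field poly poly \<Rightarrow> 'k poly poly" where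
  "shy_pp q = pcompose q [:1, 1:]"

definition shx_p :: "'k::field rat2 poly \<Rightarrow> 'k rat2 poly" where
  "shx_p b = map_poly (fract_lift shx_pp) b"
definition shy_p :: "'k::field rat2 poly \<Rightarrow> 'k rat2 poly" where
  "shy_p b = map_poly (fract_lift shy_pp) b"
definition shz_p :: "'k::field rat2 poly \<Rightarrow> 'k rat2 poly" where
  "shz_p b = pcompose b [:1, 1:]"

definition Sx :: "'k::field rat3 \<Rightarrow> 'k rat3" where "Sx = fract_lift shx_p"
definition Sy :: "'k::field rat3 \<Rightarrow> 'k rat3" where "Sy = fract_lift shy_p"
definition Sz :: "'k::field rat3 \<Rightarrow> 'k rat3" where "Sz = fract_lift shz_p"

definition emb2 :: "'k::field rat2 \<Rightarrow> 'k rat3" where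
  "emb2 c = Fract [:c:] 1"

definition apply_op :: "(nat \<times> nat \<times> nat \<Rightarrow> 'k::field rat2) \<Rightarrow> 'k rat3 \<Rightarrow> 'k rat3" where
  "apply_op p f = (\<Sum>(i,j,k)\<in>{t. p t \<noteq> 0}. emb2 (p (i,j,k)) * (Sx ^^ i) ((Sy ^^ j) ((Sz ^^ k) f)))"

definition Vm :: "nat \<Rightarrow> 'k::field rat3 set" where
  "Vm m = {f. \<exists>ab :: ('k rat2 poly \<times> 'k rat2 poly) list.
      distinct (map snd ab) \<and>
      (\<forall>(a, b) \<in> set ab. degree a < degree b \<and> irreducible b) \<and>
      f = (\<Sum>(a, b) \<leftarrow> ab. Fract a (b ^ m))}"

end

theory Submission imports Defs begin

definition rhom :: "('a::comm_ring_1 \<Rightarrow> 'a) \<Rightarrow> bool" where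
  "rhom h \<longleftrightarrow> h 1 = 1 \<and> (\<forall>x y. h (x + y) = h x + h y) \<and> (\<forall>x y. h (x * y) = h x * h y)"

definition aut :: "('a::comm_ring_1 \<Rightarrow> 'a) \<Rightarrow> ('a \<Rightarrow> 'a) \<Rightarrow> bool" where
  "aut h g \<longleftrightarrow> rhom h \<and> rhom g \<and> (\<forall>x. g (h x) = x) \<and> (\<forall>x. h (g x) = x)"

lemma rhom_0: "rhom h \<Longrightarrow> h 0 = 0"
  unfolding rhom_def by (metis add_cancel_right_right add_0)

lemma rhom_add: "rhom h \<Longrightarrow> h (x + y) = h x + h y" unfolding rhom_def by blast
lemma rhom_mult: "rhom h \<Longrightarrow> h (x * y) = h x * h y" unfolding rhom_def by blast
lemma rhom_1: "rhom h \<Longrightarrow> h 1 = 1" unfolding rhom_def by blast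
lemma rhom_power: "rhom h \<Longrightarrow> h (x ^ n) = h x ^ n"
  by (induction n) (auto simp: rhom_1 rhom_mult)
lemma rhom_sum_list: "rhom h \<Longrightarrow> h (sum_list xs) = sum_list (map h xs)"
  by (induction xs) (auto simp: rhom_0 rhom_add)

lemma aut_sym: "aut h g \<Longrightarrow> aut g h" unfolding aut_def by blast
lemma aut_inj: "aut h g \<Longrightarrow> inj h" unfolding aut_def by (metis injI)
lemma aut_nz: "aut h g \<Longrightarrow> x \<noteq> 0 \<Longrightarrow> h x \<noteq> 0"
  unfolding aut_def by (metis rhom_0)

lemma aut_unit: assumes "aut h g" "x dvd 1" shows "h x dvd 1"
proof -
  from assms(2) obtain y where "1 = x * y" by (auto elim: dvdE)
  hence "1 = h x * h y" using assms(1) unfolding aut_def by (metis rhom_1 rhom_mult)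
  thus ?thesis by (rule dvdI)
qed

lemma aut_irreducible: assumes "aut h g" "irreducible x" shows "irreducible (h x)"
proof (rule irreducibleI)
  show "h x \<noteq> 0" using assms aut_nz by (metis not_irreducible_zero)
  show "\<not> h x dvd 1" using aut_unit[OF aut_sym[OF assms(1)], of "h x"] assms
    unfolding aut_def by (metis irreducible_not_unit)
  fix a b assume "h x = a * b"
  hence "x = g a * g b" using assms(1) unfolding aut_def by (metis rhom_mult)
  hence "g a dvd 1 \<or> g b dvd 1" using assms(2) irreducibleD by blast
  thus "a dvd 1 \<or> b dvd 1" using aut_unit[OF assms(1)] assms(1) unfolding aut_def by metis
qed

lemma fract_lift_Fract:
  fixes h :: "'a::idom \<Rightarrow> 'a"
  assumes "aut h g" "b \<noteq> 0"
  shows "fract_lift h (Fract a b) = Fract (h a) (h b)"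
proof -
  have "(\<exists>a' b'. b' \<noteq> 0 \<and> Fract a b = Fract a' b' \<and> G = Fract (h a') (h b'))
        \<longleftrightarrow> G = Fract (h a) (h b)" for G
  proof
    assume "\<exists>a' b'. b' \<noteq> 0 \<and> Fract a b = Fract a' b' \<and> G = Fract (h a') (h b')"
    then obtain a' b' where ab: "b' \<noteq> 0" "Fract a b = Fract a' b'" "G = Fract (h a') (h b')" by blast
    have "a * b' = a' * b" using ab assms eq_fract(1) by metis
    hence "h a * h b' = h a' * h b" using assms(1) unfolding aut_def by (metis rhom_mult)
    moreover have "h b \<noteq> 0" "h b' \<noteq> 0" using aut_nz assms ab by auto
    ultimately show "G = Fract (h a) (h b)" using ab eq_fract(1) by metis
  next
    assume "G = Fract (h a) (h b)"
    thus "\<exists>a' b'. b' \<noteq> 0 \<and> Fract a b = Fract a' b' \<and> G = Fract (h a') (h b')" using assms(2) by blast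
  qed
  thus ?thesis unfolding fract_lift_def by simp
qed

lemma fract_lift_aut:
  fixes h :: "'a::idom \<Rightarrow> 'a"
  assumes "aut h g"
  shows "aut (fract_lift h) (fract_lift g)"
proof -
  have g: "aut g h" using aut_sym assms .
  have R: "rhom (fract_lift h)" if H: "aut h g" for h g :: "'a \<Rightarrow> 'a"
  proof -
    have r: "rhom h" using H unfolding aut_def by blast
    have nz: "\<And>x. x \<noteq> 0 \<Longrightarrow> h x \<noteq> 0" using aut_nz H by blast
    show ?thesis unfolding rhom_def
    proof (intro conjI allI)
      show "fract_lift h 1 = 1" using fract_lift_Fract[OF H, of 1 1] r
        by (simp add: One_fract_def rhom_1)
      fix x y :: "'a fract"
      show "fract_lift h (x + y) = fract_lift h x + fract_lift h y"
        by (cases x, cases y) (simp add: fract_lift_Fract[OF H] nz rhom_add[OF r] rhom_mult[OF r])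
      show "fract_lift h (x * y) = fract_lift h x * fract_lift h y"
        by (cases x, cases y) (simp add: fract_lift_Fract[OF H] nz rhom_mult[OF r])
    qed
  qed
  have I: "fract_lift g (fract_lift h x) = x" if H: "aut h g" for h g :: "'a \<Rightarrow> 'a" and x
  proof (cases x)
    case (Fract a b)
    have "h b \<noteq> 0" using aut_nz H Fract by blast
    thus ?thesis using Fract fract_lift_Fract[OF H] fract_lift_Fract[OF aut_sym[OF H]] H
      unfolding aut_def by simp
  qed
  show ?thesis unfolding aut_def using R[OF assms] R[OF g] I[OF assms] I[OF g] by blast
qed

lemma map_poly_add_h: "rhom h \<Longrightarrow> map_poly h (p + q) = map_poly h p + map_poly h q"
  by (intro poly_eqI) (simp add: coeff_map_poly rhom_0 rhom_add)

lemma map_poly_mult_h: assumes "rhom h" shows "map_poly h (p * q) = map_poly h p * map_poly h q"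
proof (induction p)
  case 0 then show ?case by simp
next
  case (pCons a p)
  have "map_poly h (pCons a p * q) = map_poly h (smult a q) + map_poly h (pCons 0 (p * q))"
    by (simp add: map_poly_add_h[OF assms])
  also have "\<dots> = smult (h a) (map_poly h q) + pCons 0 (map_poly h p * map_poly h q)"
    using assms by (simp add: map_poly_smult map_poly_pCons rhom_0 rhom_mult pCons.IH)
  also have "\<dots> = map_poly h (pCons a p) * map_poly h q"
    using assms by (simp add: map_poly_pCons rhom_0)
  finally show ?case .
qed

lemma map_poly_aut:
  fixes h :: "'a::comm_ring_1 \<Rightarrow> 'a"
  assumes "aut h g"
  shows "aut (map_poly h) (map_poly g)"
proof -
  have rh: "rhom h" and rg: "rhom g" using assms unfolding aut_def by auto
  have R: "rhom (map_poly f)" if "rhom f" for f :: "'a \<Rightarrow> 'a"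
    unfolding rhom_def using that by (simp add: rhom_1 map_poly_add_h map_poly_mult_h)
  have "map_poly g (map_poly h p) = p" "map_poly h (map_poly g p) = p" for p
    using assms unfolding aut_def
    by (simp_all add: map_poly_map_poly rhom_0 rh rg o_def)
  thus ?thesis unfolding aut_def using R rh rg by blast
qed

lemma pcomp_aut:
  "aut (\<lambda>p::'a::comm_ring_1 poly. pcompose p [:1,1:]) (\<lambda>p. pcompose p [:-1,1:])"
proof -
  have R: "rhom (\<lambda>p::'a poly. pcompose p q)" for q
    unfolding rhom_def by (simp add: pcompose_1 pcompose_add pcompose_mult)
  have "pcompose [:1,1::'a:] [:-1,1:] = [:0,1:]" "pcompose [:-1,1::'a:] [:1,1:] = [:0,1:]"
    by (simp_all add: pcompose_pCons)
  hence "pcompose (pcompose p [:1,1:]) [:-1,1:] = p" "pcompose (pcompose p [:-1,1:]) [:1,1:] = p"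
    for p :: "'a poly" by (simp_all flip: pcompose_assoc)
  thus ?thesis unfolding aut_def using R by blast
qed


lemma shx_pp_aut: "aut (shx_pp :: 'k::field poly poly \<Rightarrow> _) (map_poly (\<lambda>c. pcompose c [:-1,1:]))"
  unfolding shx_pp_def[abs_def] using map_poly_aut[OF pcomp_aut] .

lemma shy_pp_aut: "aut (shy_pp :: 'k::field poly poly \<Rightarrow> _) (\<lambda>p. pcompose p [:-1,1:])"
  unfolding shy_pp_def[abs_def] using pcomp_aut .

lemma deg_map_aut: "aut h g \<Longrightarrow> degree (map_poly h p) = degree p"
  by (rule degree_map_poly) (rule aut_nz)

lemma shx_p_aut: "\<exists>g. aut (shx_p :: 'k::field rat2 poly \<Rightarrow> _) g \<and> (\<forall>p. degree (shx_p p) = degree p)"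
  unfolding shx_p_def[abs_def]
  using map_poly_aut[OF fract_lift_aut[OF shx_pp_aut]] deg_map_aut[OF fract_lift_aut[OF shx_pp_aut]]
  by blast

lemma shy_p_aut: "\<exists>g. aut (shy_p :: 'k::field rat2 poly \<Rightarrow> _) g \<and> (\<forall>p. degree (shy_p p) = degree p)"
  unfolding shy_p_def[abs_def]
  using map_poly_aut[OF fract_lift_aut[OF shy_pp_aut]] deg_map_aut[OF fract_lift_aut[OF shy_pp_aut]]
  by blast

lemma shz_p_aut: "\<exists>g. aut (shz_p :: 'k::field rat2 poly \<Rightarrow> _) g \<and> (\<forall>p. degree (shz_p p) = degree p)"
  unfolding shz_p_def[abs_def] using pcomp_aut by (auto simp: degree_pcompose)

lemma Vm_lift:
  fixes H :: "'k::field rat2 poly \<Rightarrow> _"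
  assumes "aut H G" "\<And>p. degree (H p) = degree p" "f \<in> Vm m"
  shows "fract_lift H f \<in> Vm m"
proof -
  obtain ab where ab: "distinct (map snd ab)"
      "\<forall>(a, b) \<in> set ab. degree a < degree b \<and> irreducible b"
      "f = (\<Sum>(a, b) \<leftarrow> ab. Fract a (b ^ m))" using assms(3) unfolding Vm_def by blast
  define ab' where "ab' = map (\<lambda>(a,b). (H a, H b)) ab"
  have r: "rhom (fract_lift H)" using fract_lift_aut[OF assms(1)] unfolding aut_def by blast
  have rH: "rhom H" using assms(1) unfolding aut_def by blast
  have "map snd ab' = map H (map snd ab)" unfolding ab'_def by (induction ab) auto
  hence d: "distinct (map snd ab')" using ab(1) aut_inj[OF assms(1)] by (simp add: distinct_map inj_on_def) 
  have c: "\<forall>(a, b) \<in> set ab'. degree a < degree b \<and> irreducible b"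
    using ab(2) assms(2) aut_irreducible[OF assms(1)] unfolding ab'_def by auto
  have "fract_lift H f = (\<Sum>x \<leftarrow> ab. fract_lift H ((\<lambda>(a,b). Fract a (b ^ m)) x))"
    unfolding ab(3) rhom_sum_list[OF r] by (simp add: o_def)
  also have "\<dots> = (\<Sum>x \<leftarrow> ab. (\<lambda>(a,b). Fract (H a) (H b ^ m)) x)"
  proof (rule arg_cong[where f = sum_list], rule map_cong[OF refl])
    fix x assume "x \<in> set ab"
    then obtain a b where x: "x = (a,b)" "irreducible b" using ab(2) by (cases x) auto
    hence "b ^ m \<noteq> 0" by auto
    thus "fract_lift H ((\<lambda>(a,b). Fract a (b ^ m)) x) = (\<lambda>(a,b). Fract (H a) (H b ^ m)) x"
      using x fract_lift_Fract[OF assms(1)] rhom_power[OF rH] by simp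
  qed
  also have "\<dots> = (\<Sum>(a, b) \<leftarrow> ab'. Fract a (b ^ m))"
    unfolding ab'_def by (simp add: o_def case_prod_beta)
  finally show ?thesis unfolding Vm_def using d c by blast
qed

lemma Sx_Vm: "f \<in> Vm m \<Longrightarrow> Sx f \<in> Vm m"
  using shx_p_aut Vm_lift unfolding Sx_def by metis
lemma Sy_Vm: "f \<in> Vm m \<Longrightarrow> Sy f \<in> Vm m"
  using shy_p_aut Vm_lift unfolding Sy_def by metis
lemma Sz_Vm: "f \<in> Vm m \<Longrightarrow> Sz f \<in> Vm m"
  using shz_p_aut Vm_lift unfolding Sz_def by metis

lemma iter_Vm:
  fixes S :: "'k::field rat3 \<Rightarrow> 'k rat3"
  assumes "\<And>f. f \<in> Vm m \<Longrightarrow> S f \<in> Vm m" "f \<in> Vm m" shows "(S ^^ n) f \<in> Vm m"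
proof (induction n)
  case 0 show ?case using assms(2) by simp
next
  case (Suc n) thus ?case using assms(1) by simp
qed


abbreviation "good (ab :: ('k::field rat2 poly \<times> 'k rat2 poly) list) \<equiv>
  distinct (map snd ab) \<and> (\<forall>(a, b) \<in> set ab. degree a < degree b \<and> irreducible b)"

lemma Fract_same: "c \<noteq> 0 \<Longrightarrow> Fract a c + Fract a' c = Fract (a + a') (c::'a::idom)"
  by (simp add: eq_fract algebra_simps)

lemma ins_term:
  fixes ab :: "('k::field rat2 poly \<times> 'k rat2 poly) list"
  assumes "good ab" "degree a < degree b" "irreducible b"
  shows "\<exists>ab'. good ab' \<and> set (map snd ab') \<subseteq> insert b (set (map snd ab)) \<and>
     Fract a (b ^ m) + (\<Sum>(a, b) \<leftarrow> ab. Fract a (b ^ m)) = (\<Sum>(a, b) \<leftarrow> ab'. Fract a (b ^ m))"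
  using assms(1)
proof (induction ab)
  case Nil
  show ?case by (rule exI[of _ "[(a,b)]"]) (use assms in auto)
next
  case (Cons x rest)
  obtain a' b' where x: "x = (a', b')" by (cases x)
  show ?case
  proof (cases "b' = b")
    case True
    have bm: "b ^ m \<noteq> 0" using assms(3) by auto
    have "degree (a' + a) < degree b" using Cons.prems x True assms(2)
      by (auto intro: le_less_trans[OF degree_add_le_max])
    hence g: "good ((a' + a, b) # rest)" using Cons.prems x True assms(3) by auto
    have "Fract a (b ^ m) + (\<Sum>(a, b) \<leftarrow> x # rest. Fract a (b ^ m))
        = Fract (a' + a) (b ^ m) + (\<Sum>(a, b) \<leftarrow> rest. Fract a (b ^ m))"
      using x True Fract_same[OF bm, of a' a] Fract_same[OF bm, of a a']
      by (simp add: add.assoc[symmetric] add.commute)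
    thus ?thesis using g x True by (intro exI[of _ "(a' + a, b) # rest"]) auto
  next
    case False
    have "good rest" using Cons.prems by auto
    from Cons.IH[OF this] obtain ab'' where ab'': "good ab''"
      "set (map snd ab'') \<subseteq> insert b (set (map snd rest))"
      "Fract a (b ^ m) + (\<Sum>(a, b) \<leftarrow> rest. Fract a (b ^ m)) = (\<Sum>(a, b) \<leftarrow> ab''. Fract a (b ^ m))"
      by blast
    have "b' \<notin> set (map snd ab'')" using ab''(2) False Cons.prems x by auto
    hence g: "good (x # ab'')" using ab''(1) Cons.prems x by auto
    have "Fract a (b ^ m) + (\<Sum>(a, b) \<leftarrow> x # rest. Fract a (b ^ m))
        = (\<Sum>(a, b) \<leftarrow> x # ab''. Fract a (b ^ m))"
      using ab''(3) by (simp add: algebra_simps flip: ab''(3))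
    thus ?thesis using g ab''(2) x by (intro exI[of _ "x # ab''"]) auto
  qed
qed

lemma Vm_add: assumes "f \<in> Vm m" "g \<in> Vm m" shows "f + g \<in> Vm m"
proof -
  obtain ab where ab: "good ab" "f = (\<Sum>(a, b) \<leftarrow> ab. Fract a (b ^ m))"
    using assms(1) unfolding Vm_def by blast
  have "(\<Sum>(a, b) \<leftarrow> ab. Fract a (b ^ m)) + g \<in> Vm m" using ab(1)
  proof (induction ab)
    case Nil thus ?case using assms(2) by simp
  next
    case (Cons x rest)
    obtain a b where x: "x = (a, b)" by (cases x)
    have "(\<Sum>(a, b) \<leftarrow> rest. Fract a (b ^ m)) + g \<in> Vm m" using Cons by auto
    then obtain ab' where ab': "good ab'"
      "(\<Sum>(a, b) \<leftarrow> rest. Fract a (b ^ m)) + g = (\<Sum>(a, b) \<leftarrow> ab'. Fract a (b ^ m))"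
      unfolding Vm_def by blast
    have "degree a < degree b" "irreducible b" using Cons.prems x by auto
    from ins_term[OF ab'(1) this, of m] obtain ab'' where "good ab''"
      "Fract a (b ^ m) + (\<Sum>(a, b) \<leftarrow> ab'. Fract a (b ^ m)) = (\<Sum>(a, b) \<leftarrow> ab''. Fract a (b ^ m))"
      by blast
    moreover have "(\<Sum>(a, b) \<leftarrow> x # rest. Fract a (b ^ m)) + g
        = Fract a (b ^ m) + (\<Sum>(a, b) \<leftarrow> ab'. Fract a (b ^ m))"
      using x by (simp add: add.assoc flip: ab'(2))
    ultimately show ?case unfolding Vm_def by auto
  qed
  thus ?thesis using ab by simp
qed

lemma Vm_0: "0 \<in> Vm m"
  unfolding Vm_def by (rule CollectI, rule exI[of _ "[]"]) simp

lemma Vm_scal: assumes "f \<in> Vm m" shows "emb2 c * f \<in> Vm m"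
proof -
  obtain ab where ab: "good ab" "f = (\<Sum>(a, b) \<leftarrow> ab. Fract a (b ^ m))"
    using assms(1) unfolding Vm_def by blast
  define ab' where "ab' = map (\<lambda>(a,b). (smult c a, b)) ab"
  have "map snd ab' = map snd ab" unfolding ab'_def by (induction ab) auto
  moreover have "\<forall>(a, b) \<in> set ab'. degree a < degree b \<and> irreducible b"
    using ab(1) unfolding ab'_def by (auto intro: le_less_trans[OF degree_smult_le])
  moreover have "emb2 c * f = (\<Sum>(a, b) \<leftarrow> ab'. Fract a (b ^ m))"
    unfolding ab(2) ab'_def emb2_def
    by (induction ab) (auto simp: algebra_simps)
  ultimately show ?thesis using ab(1) unfolding Vm_def by (intro CollectI exI[of _ ab']) (simp only: simp_thms)
qed

lemma Vm_sum: "finite A \<Longrightarrow> (\<And>x. x \<in> A \<Longrightarrow> g x \<in> Vm m) \<Longrightarrow> sum g A \<in> Vm m"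
  by (induction A rule: finite_induct) (auto intro: Vm_0 Vm_add)

theorem lemma5p1:
  fixes m :: nat and f :: "'k::field_char_0 rat3"
    and p :: "nat \<times> nat \<times> nat \<Rightarrow> 'k rat2"
  assumes "m > 0"
    and "f \<in> Vm m"
    and "finite {t. p t \<noteq> 0}"
  shows "apply_op p f \<in> Vm m"
  unfolding apply_op_def
proof (rule Vm_sum[OF assms(3)])
  fix t assume "t \<in> {t. p t \<noteq> 0}"
  obtain i j k where t: "t = (i, j, k)" by (cases t)
  have "(Sx ^^ i) ((Sy ^^ j) ((Sz ^^ k) f)) \<in> Vm m"
    by (intro iter_Vm Sx_Vm Sy_Vm Sz_Vm assms(2))
  thus "(case t of (i, j, k) \<Rightarrow> emb2 (p (i, j, k)) * (Sx ^^ i) ((Sy ^^ j) ((Sz ^^ k) f))) \<in> Vm m"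
    using t by (simp add: Vm_scal)
qed

end
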